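(* Let $a_2,a_5$ be real constants, not both zero, and $k_1,k_2,k_3$ real constants. On the region where $r=\sqrt{x^2+y^2}>0$ and $a_2y-a_5x\neq0$, let $$V=\frac{k_1}{(a_2y-a_5x)^2}+\frac{k_2}{r}+\frac{k_3(a_2x+a_5y)}{r(a_2y-a_5x)^2}.$$ With $L=x\dot y-y\dot x$, the function $$J=(a_2\dot x+a_5\dot y)L^2+\frac{2k_1r^2}{(a_2y-a_5x)^2}(a_2\dot x+a_5\dot y)-\frac{k_2(a_2y-a_5x)}{r}L+\frac{k_3r}{a_2y-a_5x}(a_2\dot y-a_5\dot x)-\frac{k_3(a_2x+a_5y)}{r(a_2y-a_5x)}L+\frac{2k_3(a_2x+a_5y)r}{(a_2y-a_5x)^2}(a_2\dot x+a_5\dot y)$$ is a first integral of $\ddot x=-V_{,x}$, $\ddot y=-V_{,y}$.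
   Context: A first integral is a function of $(t,x,y,\dot x,\dot y)$ whose total time derivative vanishes along every solution of the given equations of motion. *)

theory Defs
  imports Complex_Main
begin

definition Vpot :: "real \<Rightarrow> real \<Rightarrow> real \<Rightarrow> real \<Rightarrow> real \<Rightarrow> real \<Rightarrow> real \<Rightarrow> real" where
  "Vpot a2 a5 k1 k2 k3 x y =
     k1 / (a2*y - a5*x)^2 + k2 / sqrt (x^2 + y^2)
     + k3 * (a2*x + a5*y) / (sqrt (x^2 + y^2) * (a2*y - a5*x)^2)"

definition Jint :: "real \<Rightarrow> real \<Rightarrow> real \<Rightarrow> real \<Rightarrow> real \<Rightarrow> real \<Rightarrow> real \<Rightarrow> real \<Rightarrow> real \<Rightarrow> real" where
  "Jint a2 a5 k1 k2 k3 x y vx vy =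
     (let r = sqrt (x^2 + y^2); L = x*vy - y*vx; D = a2*y - a5*x; P = a2*x + a5*y in
      (a2*vx + a5*vy) * L^2
      + 2*k1*r^2 / D^2 * (a2*vx + a5*vy)
      - k2*D / r * L
      + k3*r / D * (a2*vy - a5*vx)
      - k3*P / (r*D) * L
      + 2*k3*P*r / D^2 * (a2*vx + a5*vy))"

end

theory Submission
  imports Defs
begin

lemma Vx:
  fixes a2 a5 k1 k2 k3 u y :: real
  assumes "u^2+y^2>0" "a2*y-a5*u \<noteq> 0"
  shows "((\<lambda>u. Vpot a2 a5 k1 k2 k3 u y) has_real_derivative
     (let r = sqrt (u^2+y^2); D = a2*y-a5*u; P = a2*u+a5*y in
      2*k1*a5/D^3 - k2*u/r^3 + k3*(a2/(r*D^2) - P*u/(r^3*D^2) + 2*a5*P/(r*D^3)))) (at u)"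
proof -
  define r where "r = sqrt (u^2+y^2)"
  define d where "d = a2*y-a5*u"
  have d0: "d \<noteq> 0" using assms d_def by simp
  have r0: "r > 0" using assms r_def by simp
  show ?thesis
  unfolding Vpot_def Let_def
  apply (rule derivative_eq_intros refl | use assms in force)+
  apply (fold r_def d_def)
  apply (simp add: inverse_eq_divide)
  using r0 d0 apply (simp add: divide_simps)
  apply algebra
  done
qed

lemma Vy:
  fixes a2 a5 k1 k2 k3 u y :: real
  assumes "u^2+y^2>0" "a2*y-a5*u \<noteq> 0"
  shows "((\<lambda>y. Vpot a2 a5 k1 k2 k3 u y) has_real_derivative
     (let r = sqrt (u^2+y^2); D = a2*y-a5*u; P = a2*u+a5*y in
      -2*k1*a2/D^3 - k2*y/r^3 + k3*(a5/(r*D^2) - P*y/(r^3*D^2) - 2*a2*P/(r*D^3)))) (at y)"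
proof -
  define r where "r = sqrt (u^2+y^2)"
  define d where "d = a2*y-a5*u"
  have d0: "d \<noteq> 0" using assms d_def by simp
  have r0: "r > 0" using assms r_def by simp
  show ?thesis
  unfolding Vpot_def Let_def
  apply (rule derivative_eq_intros refl | use assms in force)+
  apply (fold r_def d_def)
  apply (simp add: inverse_eq_divide)
  using r0 d0 apply (simp add: divide_simps)
  apply algebra
  done
qed

lemma two_m: "(2::nat) - Suc 0 = 1" by simp

lemma pointwise:
  fixes a2 a5 k1 k2 k3 t :: real and x y vx vy :: "real \<Rightarrow> real"
  assumes dx: "(x has_real_derivative vx t) (at t)"
    and dy: "(y has_real_derivative vy t) (at t)"
    and dvx: "(vx has_real_derivative (let u = x t; y = y t; r = sqrt (u^2+y^2); D = a2*y-a5*u; P = a2*u+a5*y in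
      -(2*k1*a5/D^3 - k2*u/r^3 + k3*(a2/(r*D^2) - P*u/(r^3*D^2) + 2*a5*P/(r*D^3))))) (at t)"
    and dvy: "(vy has_real_derivative (let u = x t; y = y t; r = sqrt (u^2+y^2); D = a2*y-a5*u; P = a2*u+a5*y in
      -(-2*k1*a2/D^3 - k2*y/r^3 + k3*(a5/(r*D^2) - P*y/(r^3*D^2) - 2*a2*P/(r*D^3))))) (at t)"
    and pos: "(x t)^2 + (y t)^2 > 0" and dn: "a2 * y t - a5 * x t \<noteq> 0"
  shows "((\<lambda>s. Jint a2 a5 k1 k2 k3 (x s) (y s) (vx s) (vy s)) has_real_derivative 0) (at t)"
proof -
  define r where "r = sqrt ((x t)^2+(y t)^2)"
  define d where "d = a2 * y t - a5 * x t"
  have d0: "d \<noteq> 0" using dn d_def by simp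
  have r0: "r > 0" using pos r_def by simp
  have r2: "r^2 = (x t)^2+(y t)^2" using pos r_def by simp
  have rI: "r * inverse r = 1" using r0 by simp
  have tI: "2 * inverse 2 = (1::real)" by simp
  have dI: "d * inverse d = 1" using d0 by simp
  show ?thesis
  unfolding Jint_def Let_def
  apply (rule derivative_eq_intros refl dx dy dvx dvy | use pos dn in force)+
  apply (unfold Let_def)
  apply (fold r_def d_def)
  apply (simp only: divide_inverse inverse_mult_distrib power_inverse[symmetric] mult_zero_left mult_zero_right add_0 add_0_right diff_zero zero_diff mult_1_left mult_1_right of_nat_numeral two_m power_one_right)
  using r2 d_def rI dI tI apply algebra
  
  done
qed
theorem mainTheorem7:
  fixes a2 a5 k1 k2 k3 :: real
    and x y vx vy ax ay :: "real \<Rightarrow> real"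
    and S :: "real set"
  assumes "a2 \<noteq> 0 \<or> a5 \<noteq> 0"
    and "open S"
    and "\<forall>t\<in>S. (x has_real_derivative vx t) (at t)"
    and "\<forall>t\<in>S. (y has_real_derivative vy t) (at t)"
    and "\<forall>t\<in>S. (vx has_real_derivative ax t) (at t)"
    and "\<forall>t\<in>S. (vy has_real_derivative ay t) (at t)"
    and "\<forall>t\<in>S. sqrt ((x t)^2 + (y t)^2) > 0 \<and> a2 * y t - a5 * x t \<noteq> 0"
    and "\<forall>t\<in>S. ((\<lambda>u. Vpot a2 a5 k1 k2 k3 u (y t)) has_real_derivative (- ax t)) (at (x t))"
    and "\<forall>t\<in>S. ((\<lambda>u. Vpot a2 a5 k1 k2 k3 (x t) u) has_real_derivative (- ay t)) (at (y t))"
  shows "\<forall>t\<in>S. ((\<lambda>s. Jint a2 a5 k1 k2 k3 (x s) (y s) (vx s) (vy s))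
                   has_real_derivative 0) (at t)"
proof
  fix t assume t: "t \<in> S"
  have pos: "(x t)^2 + (y t)^2 > 0" and dn: "a2 * y t - a5 * x t \<noteq> 0"
    using assms(7) t by auto
  have ex: "- ax t = (let u = x t; y = y t; r = sqrt (u^2+y^2); D = a2*y-a5*u; P = a2*u+a5*y in
      2*k1*a5/D^3 - k2*u/r^3 + k3*(a2/(r*D^2) - P*u/(r^3*D^2) + 2*a5*P/(r*D^3)))"
    using DERIV_unique[OF assms(8)[rule_format, OF t] Vx[OF pos dn]] by (simp add: Let_def)
  have ey: "- ay t = (let u = x t; y = y t; r = sqrt (u^2+y^2); D = a2*y-a5*u; P = a2*u+a5*y in
      -2*k1*a2/D^3 - k2*y/r^3 + k3*(a5/(r*D^2) - P*y/(r^3*D^2) - 2*a2*P/(r*D^3)))"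
    using DERIV_unique[OF assms(9)[rule_format, OF t] Vy[OF pos dn]] by (simp add: Let_def)
  have ax: "ax t = - (let u = x t; y = y t; r = sqrt (u^2+y^2); D = a2*y-a5*u; P = a2*u+a5*y in
      2*k1*a5/D^3 - k2*u/r^3 + k3*(a2/(r*D^2) - P*u/(r^3*D^2) + 2*a5*P/(r*D^3)))"
    using ex by linarith
  have ay: "ay t = - (let u = x t; y = y t; r = sqrt (u^2+y^2); D = a2*y-a5*u; P = a2*u+a5*y in
      -2*k1*a2/D^3 - k2*y/r^3 + k3*(a5/(r*D^2) - P*y/(r^3*D^2) - 2*a2*P/(r*D^3)))"
    using ey by linarith
  have d3: "(vx has_real_derivative (let u = x t; y = y t; r = sqrt (u^2+y^2); D = a2*y-a5*u; P = a2*u+a5*y in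
      -(2*k1*a5/D^3 - k2*u/r^3 + k3*(a2/(r*D^2) - P*u/(r^3*D^2) + 2*a5*P/(r*D^3))))) (at t)"
    using assms(5) t ax[unfolded Let_def] unfolding Let_def by metis
  have d4: "(vy has_real_derivative (let u = x t; y = y t; r = sqrt (u^2+y^2); D = a2*y-a5*u; P = a2*u+a5*y in
      -(-2*k1*a2/D^3 - k2*y/r^3 + k3*(a5/(r*D^2) - P*y/(r^3*D^2) - 2*a2*P/(r*D^3))))) (at t)"
    using assms(6) t ay[unfolded Let_def] unfolding Let_def by metis
  show "((\<lambda>s. Jint a2 a5 k1 k2 k3 (x s) (y s) (vx s) (vy s)) has_real_derivative 0) (at t)"
    using pointwise[where x=x and y=y and vx=vx and vy=vy and t=t, OF _ _ d3 d4 pos dn] assms(3,4) t by blast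
qed

end
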